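(* Let $R>r\ge1$ and let $f,g:\mathbb{D}_{R}\to\mathbb{C}$ be analytic in $\mathbb{D}_{R}=\{z\in\mathbb{C}:|z|<R\}$, $f(z)=\sum_{k=0}^{\infty}a_{k}z^{k}$, $g(z)=\sum_{k=0}^{\infty}b_{k}z^{k}$. Then there is a constant $C(r,f,g)$, independent of $n$, such that for all $n\in\mathbb{N}$ and all $|z|\le r$, $$\left|B_{n}(fg)(z)-B_{n}(f)(z)B_{n}(g)(z)-\frac{z(1-z)f'(z)g'(z)}{n}\right|\le\frac{C(r,f,g)}{n^{2}}.$$
   Context: For a function $h$ defined on $[0,1]$, the complex Bernstein polynomials are $B_{n}(h)(z)=\sum_{k=0}^{n}\binom{n}{k}z^{k}(1-z)^{n-k}h(k/n)$, $z\in\mathbb{C}$. *)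

theory Defs
  imports "HOL-Complex_Analysis.Complex_Analysis"
begin

text \<open>Complex Bernstein polynomial of a function h defined on [0,1]
  (values of h outside [0,1] are never used).\<close>
definition bernstein :: "nat \<Rightarrow> (real \<Rightarrow> complex) \<Rightarrow> complex \<Rightarrow> complex" where
  "bernstein n h z = (\<Sum>k=0..n. of_nat (n choose k) * z ^ k * (1 - z) ^ (n - k) * h (real k / real n))"

end

theory Submission
  imports Defs "HOL-Combinatorics.Stirling"
begin


lemma Suc_choose_rel: "Suc i * (m choose Suc i) = (m - i) * (m choose i)"
proof (cases m)
  case 0 then show ?thesis by simp
next
  case (Suc m')
  have "Suc i * (m choose Suc i) = Suc m' * (m' choose i)" using Suc Suc_times_binomial by simp
  also have "\<dots> = (m - i) * (m choose i)" using Suc binomial_absorb_comp[of m i] by simp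
  finally show ?thesis .
qed

lemma real_m_choose: "real m * real (m choose i) = real (Suc i) * real (m choose Suc i) + real i * real (m choose i)"
proof (cases "i \<le> m")
  case True
  have "real (Suc i * (m choose Suc i)) = real ((m - i) * (m choose i))" using Suc_choose_rel by metis
  then have "real (Suc i) * real (m choose Suc i) = (real m - real i) * real (m choose i)"
    using True by (simp add: of_nat_diff algebra_simps)
  then show ?thesis by (simp add: algebra_simps)
next
  case False then show ?thesis by (simp add: binomial_eq_0)
qed

lemma power_stirling: "real m ^ k = (\<Sum>i\<le>k. real (Stirling k i) * fact i * real (m choose i))"
proof (induction k)
  case 0 then show ?case by simp
next
  case (Suc k)
  define h where "h i = real i * real (Stirling k i) * fact i * real (m choose i)" for i
  have "real m ^ Suc k = (\<Sum>i\<le>k. real (Stirling k i) * fact i * (real m * real (m choose i)))"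
    by (simp add: Suc sum_distrib_left algebra_simps)
  also have "\<dots> = (\<Sum>i\<le>k. real (Stirling k i) * fact (Suc i) * real (m choose Suc i)) + (\<Sum>i\<le>k. h i)"
    by (simp add: real_m_choose h_def algebra_simps sum.distrib del: of_nat_Suc)
  also have "(\<Sum>i\<le>k. h i) = (\<Sum>i\<le>k. h (Suc i))"
  proof -
    have "(\<Sum>i\<le>Suc k. h i) = h 0 + (\<Sum>i\<le>k. h (Suc i))" by (rule sum.atMost_Suc_shift)
    moreover have "(\<Sum>i\<le>Suc k. h i) = (\<Sum>i\<le>k. h i) + h (Suc k)" by simp
    moreover have "h 0 = 0" "h (Suc k) = 0" by (simp_all add: h_def)
    ultimately show ?thesis by simp
  qed
  also have "(\<Sum>i\<le>k. real (Stirling k i) * fact (Suc i) * real (m choose Suc i)) + (\<Sum>i\<le>k. h (Suc i))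
      = (\<Sum>i\<le>k. real (Stirling (Suc k) (Suc i)) * fact (Suc i) * real (m choose Suc i))"
    by (simp add: h_def sum.distrib[symmetric] algebra_simps del: fact_Suc)
  also have "\<dots> = (\<Sum>i\<le>Suc k. real (Stirling (Suc k) i) * fact i * real (m choose i))"
    by (subst sum.atMost_Suc_shift) simp
  finally show ?case .
qed

definition wB :: "nat \<Rightarrow> complex \<Rightarrow> nat \<Rightarrow> complex" where
  "wB n z m = of_nat (n choose m) * z ^ m * (1 - z) ^ (n - m)"

lemma bernstein_wB: "bernstein n h z = (\<Sum>m=0..n. wB n z m * h (real m / real n))"
  unfolding bernstein_def wB_def by (simp add: mult.assoc)

lemma sum_wB_choose: "(\<Sum>m=0..n. wB n z m * of_nat (m choose i)) = of_nat (n choose i) * z ^ i"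
proof (cases "i \<le> n")
  case False
  then show ?thesis by (auto intro!: sum.neutral simp: binomial_eq_0)
next
  case True
  have "(\<Sum>m=0..n. wB n z m * of_nat (m choose i)) = (\<Sum>m=i..n. wB n z m * of_nat (m choose i))"
    by (rule sum.mono_neutral_right) auto
  also have "\<dots> = (\<Sum>t=0..n-i. wB n z (t+i) * of_nat ((t+i) choose i))"
    using sum.shift_bounds_cl_nat_ivl[of "\<lambda>m. wB n z m * of_nat (m choose i)" 0 i "n-i"] True by simp
  also have "\<dots> = (\<Sum>t=0..n-i. of_nat (n choose i) * z ^ i * (of_nat ((n-i) choose t) * z ^ t * (1-z) ^ (n - i - t)))"
  proof (rule sum.cong[OF refl])
    fix t assume t: "t \<in> {0..n-i}"
    have "(n choose (t+i)) * ((t+i) choose i) = (n choose i) * ((n-i) choose t)"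
      using choose_mult[of i "t+i" n] t True by simp
    then have c: "(of_nat (n choose (t+i)) :: complex) * of_nat ((t+i) choose i) = of_nat (n choose i) * of_nat ((n-i) choose t)"
      by (metis of_nat_mult)
    have "n - (t+i) = n - i - t" by simp
    then show "wB n z (t+i) * of_nat ((t+i) choose i) = of_nat (n choose i) * z ^ i * (of_nat ((n-i) choose t) * z ^ t * (1-z) ^ (n - i - t))"
      unfolding wB_def using c by (simp add: power_add algebra_simps)
  qed
  also have "\<dots> = of_nat (n choose i) * z ^ i * (z + (1 - z)) ^ (n - i)"
    unfolding binomial_ring by (simp add: sum_distrib_left atLeast0AtMost algebra_simps)
  finally show ?thesis by simp
qed



definition wt :: "nat \<Rightarrow> nat \<Rightarrow> nat \<Rightarrow> real" where
  "wt n k i = real (Stirling k i) * fact i * real (n choose i) / real n ^ k"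
definition PP :: "nat \<Rightarrow> nat \<Rightarrow> real" where
  "PP n k = fact k * real (n choose k) / real n ^ k"
definition ss :: "nat \<Rightarrow> nat \<Rightarrow> real" where
  "ss n k = real k * (real k - 1) / (2 * real n)"
definition AA :: "nat \<Rightarrow> complex \<Rightarrow> nat \<Rightarrow> complex" where
  "AA n z k = bernstein n (\<lambda>x. of_real x ^ k) z"

lemma AA_eq:
  assumes "n \<ge> 1"
  shows "AA n z k = (\<Sum>i\<le>k. of_real (wt n k i) * z ^ i)"
proof -
  have "AA n z k = (\<Sum>m=0..n. wB n z m * (\<Sum>i\<le>k. of_real (real (Stirling k i) * fact i / real n ^ k) * of_nat (m choose i)))"
    unfolding AA_def bernstein_wB
  proof (rule sum.cong[OF refl])
    fix m
    have "(of_real (real m / real n) :: complex) ^ k = of_real (real m ^ k / real n ^ k)"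
      by (simp add: power_divide)
    also have "\<dots> = of_real (\<Sum>i\<le>k. real (Stirling k i) * fact i / real n ^ k * real (m choose i))"
      by (subst power_stirling) (simp add: sum_divide_distrib)
    also have "\<dots> = (\<Sum>i\<le>k. of_real (real (Stirling k i) * fact i / real n ^ k) * of_nat (m choose i))"
      by simp
    finally show "wB n z m * of_real (real m / real n) ^ k = wB n z m * (\<Sum>i\<le>k. of_real (real (Stirling k i) * fact i / real n ^ k) * of_nat (m choose i))"
      by simp
  qed
  also have "\<dots> = (\<Sum>i\<le>k. of_real (real (Stirling k i) * fact i / real n ^ k) * (\<Sum>m=0..n. wB n z m * of_nat (m choose i)))"
    by (simp add: sum_distrib_left sum.swap[where A="{0..n}"] algebra_simps)
  also have "\<dots> = (\<Sum>i\<le>k. of_real (wt n k i) * z ^ i)"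
    by (simp add: sum_wB_choose wt_def mult.assoc)
  finally show ?thesis .
qed

lemma wt_sum: "n \<ge> 1 \<Longrightarrow> (\<Sum>i\<le>k. wt n k i) = 1"
proof -
  assume n: "n \<ge> 1"
  have "(\<Sum>i\<le>k. wt n k i) = (\<Sum>i\<le>k. real (Stirling k i) * fact i * real (n choose i)) / real n ^ k"
    unfolding wt_def by (simp add: sum_divide_distrib)
  also have "\<dots> = 1" using power_stirling[of n k, symmetric] n by simp
  finally show ?thesis .
qed

lemma wt_nonneg: "wt n k i \<ge> 0"
  unfolding wt_def by simp

lemma wt_same: "wt n k k = PP n k"
  unfolding wt_def PP_def by simp

lemma Stirling_Suc_same: "real (Stirling (Suc k) k) = real (Suc k) * real k / 2"
proof (induction k)
  case 0 then show ?case by simp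
next
  case (Suc k)
  have "real (Stirling (Suc (Suc k)) (Suc k)) = real (Suc k) + real (Stirling (Suc k) k)" by simp
  then show ?case using Suc by (simp add: field_simps)
qed

lemma wt_Suc: "n \<ge> 1 \<Longrightarrow> wt n (Suc k) k = ss n (Suc k) * PP n k"
  unfolding wt_def PP_def ss_def Stirling_Suc_same by (simp add: field_simps)

lemma PP_0: "PP n 0 = 1" by (simp add: PP_def)

lemma PP_nonneg: "PP n k \<ge> 0" by (simp add: PP_def)

lemma PP_Suc: assumes "n \<ge> 1" shows "PP n (Suc k) = PP n k * (1 - real k / real n)"
proof (cases "k \<le> n")
  case True
  have "real (Suc k * (n choose Suc k)) = real ((n - k) * (n choose k))" using Suc_choose_rel by metis
  then have "real (Suc k) * real (n choose Suc k) = (real n - real k) * real (n choose k)"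
    using True by (simp add: of_nat_diff algebra_simps)
  note h = this
  have "fact (Suc k) * real (n choose Suc k) = fact k * (real (Suc k) * real (n choose Suc k))"
    by (simp only: fact_Suc mult_ac)
  also have "\<dots> = fact k * ((real n - real k) * real (n choose k))" using h by simp
  finally have e: "fact (Suc k) * real (n choose Suc k) = fact k * ((real n - real k) * real (n choose k))" .
  have "PP n (Suc k) = fact k * ((real n - real k) * real (n choose k)) / (real n ^ k * real n)"
    unfolding PP_def e by simp
  also have "\<dots> = PP n k * (1 - real k / real n)" using assms unfolding PP_def by (simp add: field_simps)
  finally show ?thesis .
next
  case False then show ?thesis by (simp add: PP_def binomial_eq_0)
qed

lemma ss_Suc: "n \<ge> 1 \<Longrightarrow> ss n (Suc k) = ss n k + real k / real n"
  unfolding ss_def by (simp add: field_simps)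

lemma ss_nonneg: "ss n k \<ge> 0"
  unfolding ss_def by (cases k) auto

lemma PP_bounds:
  assumes "n \<ge> 1"
  shows "1 - ss n k \<le> PP n k \<and> PP n k \<le> 1 - ss n k + (ss n k)^2 / 2 \<and> PP n k \<le> 1"
proof (induction k)
  case 0 then show ?case by (simp add: PP_0 ss_def)
next
  case (Suc k)
  define s where "s = ss n k"
  define x where "x = real k / real n"
  have s0: "s \<ge> 0" using ss_nonneg s_def by simp
  have x0: "x \<ge> 0" by (simp add: x_def)
  have ssuc: "ss n (Suc k) = s + x" using ss_Suc[OF assms] s_def x_def by simp
  have psuc: "PP n (Suc k) = PP n k * (1 - x)" using PP_Suc[OF assms] x_def by simp
  show ?case
  proof (cases "k < n")
    case True
    then have x1: "x < 1" using assms by (simp add: x_def)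
    have IH: "1 - s \<le> PP n k" "PP n k \<le> 1 - s + s^2/2" "PP n k \<le> 1" using Suc s_def by auto
    have "(1 - s) * (1 - x) \<le> PP n k * (1 - x)" using IH(1) x1 by (intro mult_right_mono) auto
    moreover have "1 - (s + x) \<le> (1 - s) * (1 - x)" using s0 x0 by (simp add: algebra_simps)
    moreover have "PP n k * (1 - x) \<le> (1 - s + s^2/2) * (1 - x)" using IH(2) x1 by (intro mult_right_mono) auto
    moreover have "(1 - s + s^2/2) * (1 - x) \<le> 1 - (s + x) + (s + x)^2/2"
    proof -
      have "0 \<le> s^2 * x" using x0 by simp
      moreover have "0 \<le> x^2" by simp
      ultimately show ?thesis by (simp add: algebra_simps power2_eq_square)
    qed
    moreover have "PP n k * (1 - x) \<le> 1" using IH(3) x1 x0 PP_nonneg[of n k]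
      by (intro mult_le_one) auto
    ultimately show ?thesis unfolding ssuc psuc by linarith
  next
    case False
    then have "PP n (Suc k) = 0" by (simp add: PP_def binomial_eq_0)
    moreover have "ss n (Suc k) \<ge> 1"
    proof -
      have "real n \<le> real k" using False by simp
      moreover have "real (Suc k) \<ge> 2" using False assms by simp
      then have "real (Suc k) * real k \<ge> 2 * real k" by (intro mult_right_mono) auto
      ultimately have "real (Suc k) * real k \<ge> 2 * real n" by linarith
      then show ?thesis using assms unfolding ss_def by (simp add: field_simps)
    qed
    moreover have "0 \<le> 1 - t + t^2/2" for t :: real
    proof -
      have "0 \<le> (t - 1)^2 + 1" by simp
      then show ?thesis by (simp add: power2_eq_square algebra_simps)
    qed
    ultimately show ?thesis by auto
  qed
qed



definition uu :: "nat \<Rightarrow> complex \<Rightarrow> nat \<Rightarrow> complex" where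
  "uu n z k = of_real (ss n k) * (z ^ (k - 1) - z ^ k)"
definition ee :: "nat \<Rightarrow> complex \<Rightarrow> nat \<Rightarrow> complex" where
  "ee n z k = AA n z k - z ^ k - uu n z k"

lemma norm_zpow_le:
  assumes "1 \<le> r" "cmod z \<le> r" "i \<le> k"
  shows "cmod (z ^ i) \<le> r ^ k"
proof -
  have "cmod (z ^ i) \<le> r ^ i" unfolding norm_power by (intro power_mono) (use assms in auto)
  also have "\<dots> \<le> r ^ k" using assms by (intro power_increasing) auto
  finally show ?thesis .
qed

lemma ss_mono: "n \<ge> 1 \<Longrightarrow> ss n k \<le> ss n (Suc k)"
  using ss_Suc[of n k] by simp

lemma ee_bound:
  assumes n: "n \<ge> 1" and r: "1 \<le> r" and z: "cmod z \<le> r"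
  shows "cmod (ee n z k) \<le> 3 * (ss n k)^2 * r ^ k"
proof (cases k)
  case 0
  have "AA n z 0 = 1" using AA_eq[OF n, of z 0] wt_same[of n 0] PP_0[of n] by simp
  then show ?thesis using 0 by (simp add: ee_def uu_def ss_def)
next
  case (Suc k')
  define s where "s = ss n k"
  define s' where "s' = ss n k'"
  define P where "P = PP n k"
  define P' where "P' = PP n k'"
  define T where "T = (\<Sum>i<k'. of_real (wt n k i) * z ^ i)"
  define \<tau> where "\<tau> = (\<Sum>i<k'. wt n k i)"
  have wk: "wt n k k = P" using wt_same P_def by simp
  have wk': "wt n k k' = s * P'" using wt_Suc[OF n, of k'] Suc s_def P'_def by simp
  have sumA: "AA n z k = T + of_real (s * P') * z ^ k' + of_real P * z ^ k"
    unfolding AA_eq[OF n] T_def using wk wk' Suc by (simp add: lessThan_Suc_atMost[symmetric])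
  have sumw: "1 = \<tau> + s * P' + P"
    using wt_sum[OF n, of k] unfolding \<tau>_def using wk wk' Suc by (simp add: lessThan_Suc_atMost[symmetric])
  have eeq: "ee n z k = T + of_real (s * (P' - 1)) * z ^ k' + of_real (P - 1 + s) * z ^ k"
    unfolding ee_def uu_def sumA using Suc s_def by (simp add: algebra_simps)
  have nT: "cmod T \<le> \<tau> * r ^ k"
  proof -
    have "cmod T \<le> (\<Sum>i<k'. cmod (of_real (wt n k i) * z ^ i))" unfolding T_def by (rule norm_sum)
    also have "\<dots> \<le> (\<Sum>i<k'. wt n k i * r ^ k)"
    proof (rule sum_mono)
      fix i assume "i \<in> {..<k'}"
      then have "cmod (z ^ i) \<le> r ^ k" using norm_zpow_le[OF r z, of i k] Suc by simp
      then show "cmod (of_real (wt n k i) * z ^ i) \<le> wt n k i * r ^ k"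
        using wt_nonneg[of n k i] by (simp add: norm_mult mult_left_mono)
    qed
    finally show ?thesis unfolding \<tau>_def by (simp add: sum_distrib_right)
  qed
  have rk: "r ^ k \<ge> 0" using r by simp
  have s0: "s \<ge> 0" "s' \<ge> 0" using ss_nonneg s_def s'_def by auto
  have ss': "s' \<le> s" using ss_mono[OF n, of k'] Suc s_def s'_def by simp
  have Pb: "1 - s \<le> P" "P \<le> 1 - s + s^2/2" using PP_bounds[OF n, of k] s_def P_def by auto
  have P'b: "1 - s' \<le> P'" "P' \<le> 1" using PP_bounds[OF n, of k'] s'_def P'_def by auto
  have A1: "s * (1 - P') \<le> s * s" using P'b ss' s0 by (intro mult_left_mono) auto
  have n2: "cmod (of_real (s * (P' - 1)) * z ^ k') \<le> s * s * r ^ k"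
  proof -
    have "cmod (of_real (s * (P' - 1)) * z ^ k') = \<bar>s * (P' - 1)\<bar> * cmod (z ^ k')" by (simp only: norm_mult norm_of_real)
    also have "\<dots> \<le> (s * s) * r ^ k"
    proof (rule mult_mono)
      have "\<bar>s * (P' - 1)\<bar> = s * (1 - P')" using s0 P'b by (simp add: abs_mult abs_of_nonneg abs_of_nonpos)
      then show "\<bar>s * (P' - 1)\<bar> \<le> s * s" using A1 by simp
      show "cmod (z ^ k') \<le> r ^ k" using norm_zpow_le[OF r z, of k' k] Suc by simp
    qed (use s0 in auto)
    finally show ?thesis .
  qed
  have n3: "cmod (of_real (P - 1 + s) * z ^ k) \<le> (s^2/2) * r ^ k"
  proof -
    have "cmod (of_real (P - 1 + s) * z ^ k) = \<bar>P - 1 + s\<bar> * cmod (z ^ k)" by (simp only: norm_mult norm_of_real)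
    also have "\<dots> \<le> (s^2/2) * r ^ k"
      using Pb norm_zpow_le[OF r z, of k k] by (intro mult_mono) auto
    finally show ?thesis .
  qed
  have tau: "\<tau> \<le> s * s" using sumw Pb A1 by (simp add: algebra_simps)
  have "cmod (ee n z k) \<le> cmod T + cmod (of_real (s * (P' - 1)) * z ^ k') + cmod (of_real (P - 1 + s) * z ^ k)"
    unfolding eeq by (rule order_trans[OF norm_triangle_ineq add_right_mono[OF norm_triangle_ineq]])
  also have "\<dots> \<le> \<tau> * r ^ k + s * s * r ^ k + (s^2/2) * r ^ k" using nT n2 n3 by linarith
  also have "\<dots> \<le> 3 * s^2 * r ^ k"
  proof -
    have "\<tau> * r ^ k \<le> s * s * r ^ k" using tau rk by (intro mult_right_mono)
    moreover have "0 \<le> s * s * r ^ k" using s0 rk by simp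
    ultimately show ?thesis by (simp add: power2_eq_square)
  qed
  finally show ?thesis using s_def by simp
qed



lemma ss_zero[simp]: "ss n 0 = 0" by (simp add: ss_def)

lemma uu_ident:
  assumes n: "n \<ge> 1"
  shows "uu n z (j+k) - z^j * uu n z k - z^k * uu n z j
         = z*(1-z)*(of_nat j * z^(j-1))*(of_nat k * z^(k-1))/of_nat n"
proof (cases "j = 0 \<or> k = 0")
  case True
  then show ?thesis by (auto simp: uu_def)
next
  case False
  then obtain a b where j: "j = Suc a" and k: "k = Suc b" by (metis not0_implies_Suc)
  define w where "w = z^(a+b+1)"
  have sid: "ss n (j+k) - ss n j - ss n k = real j * real k / real n"
    unfolding ss_def using n by (simp add: field_simps)
  have p1: "z^(j+k-1) = w" "z^(j+k) = w*z" using j k by (simp_all add: w_def)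
  have p2: "z^j * (z^(k-1) - z^k) = w - w*z" "z^k * (z^(j-1) - z^j) = w - w*z"
    using j k by (simp_all add: w_def algebra_simps power_add)
  have p3: "z*(1-z)*(of_nat j * z^(j-1))*(of_nat k * z^(k-1))/of_nat n
      = of_real (real j * real k / real n) * (w - w*z)"
  proof -
    have nz: "(of_nat n :: complex) \<noteq> 0" using n by simp
    show ?thesis using j k nz by (simp add: w_def field_simps power_add)
  qed
  have "uu n z (j+k) - z^j * uu n z k - z^k * uu n z j
        = of_real (ss n (j+k) - ss n j - ss n k) * (w - w*z)"
  proof -
    have q0: "uu n z (j+k) = of_real (ss n (j+k)) * (w - w*z)" unfolding uu_def p1 by simp
    have q1: "z^j * uu n z k = of_real (ss n k) * (w - w*z)" unfolding uu_def by (metis mult.left_commute p2(1))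
    have q2: "z^k * uu n z j = of_real (ss n j) * (w - w*z)" unfolding uu_def by (metis mult.left_commute p2(2))
    show ?thesis unfolding q0 q1 q2 of_real_diff by (simp add: algebra_simps)
  qed
  also have "\<dots> = of_real (real j * real k / real n) * (w - w*z)" by (simp only: sid)
  also have "\<dots> = z*(1-z)*(of_nat j * z^(j-1))*(of_nat k * z^(k-1))/of_nat n" by (rule p3[symmetric])
  finally show ?thesis .
qed

lemma ss_le: assumes "n \<ge> 1" shows "ss n m \<le> (real m + 1)^2 / real n"
proof -
  have "real m * (real m - 1) / 2 \<le> (real m + 1)^2" by (simp add: power2_eq_square algebra_simps)
  then have "(real m * (real m - 1) / 2) / real n \<le> (real m + 1)^2 / real n"
    by (rule divide_right_mono) simp
  moreover have "ss n m = (real m * (real m - 1) / 2) / real n" unfolding ss_def by simp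
  ultimately show ?thesis by simp
qed

lemma uu_bound:
  assumes r: "1 \<le> r" and z: "cmod z \<le> r"
  shows "cmod (uu n z m) \<le> 2 * ss n m * r^m"
proof (cases m)
  case 0 then show ?thesis by (simp add: uu_def)
next
  case (Suc m')
  have "cmod (z^m' - z^Suc m') = cmod (z^m') * cmod (1 - z)" by (simp add: norm_mult[symmetric] algebra_simps)
  also have "\<dots> \<le> r^m' * (2*r)"
  proof (rule mult_mono)
    show "cmod (z^m') \<le> r^m'" using norm_zpow_le[OF r z, of m' m'] by simp
    have "cmod (1 - z) \<le> 1 + cmod z" by (metis norm_one norm_triangle_ineq4)
    then show "cmod (1 - z) \<le> 2*r" using r z by linarith
  qed (use r in auto)
  also have "\<dots> = 2 * r^m" using Suc by simp
  finally have "cmod (z^(m-1) - z^m) \<le> 2 * r^m" using Suc by simp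
  then have "ss n m * cmod (z^(m-1) - z^m) \<le> ss n m * (2 * r^m)"
    using ss_nonneg[of n m] by (intro mult_left_mono) auto
  then show ?thesis unfolding uu_def norm_mult norm_of_real using ss_nonneg[of n m] by simp
qed



lemma num_aux:
  fixes aj ak ajk M :: real
  assumes "0 \<le> aj" "aj \<le> M" "0 \<le> ak" "ak \<le> M" "0 \<le> ajk" "ajk \<le> M"
  shows "3*ajk^2 + 3*ak^2 + 3*aj^2 + 4*(aj*ak) + 6*(aj*ak^2) + 6*(aj^2*ak) + 9*(aj^2*ak^2)
         \<le> 13 * M^2 + 12 * M^3 + 9 * M^4"
proof -
  have M0: "0 \<le> M" using assms by linarith
  have a: "ajk^2 \<le> M^2" "ak^2 \<le> M^2" "aj^2 \<le> M^2" using assms by (auto intro: power_mono)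
  have b: "aj*ak \<le> M*M" using assms by (intro mult_mono) auto
  have c: "aj*ak^2 \<le> M*M^2" using assms a by (intro mult_mono) auto
  have d: "aj^2*ak \<le> M^2*M" using assms a by (intro mult_mono) auto
  have e: "aj^2*ak^2 \<le> M^2*M^2" using assms a by (intro mult_mono) auto
  have b': "aj*ak \<le> M^2" using b by (simp add: power2_eq_square)
  have c': "aj*ak^2 \<le> M^3" using c by (simp add: power2_eq_square power3_eq_cube)
  have d': "aj^2*ak \<le> M^3" using d by (simp add: power2_eq_square power3_eq_cube)
  have e': "aj^2*ak^2 \<le> M^4" using e by (simp add: power2_eq_square power4_eq_xxxx)
  show ?thesis using a b' c' d' e' by linarith
qed

lemma num_aux2:
  fixes G \<beta> :: real
  assumes "1 \<le> G" "0 < \<beta>" "\<beta> \<le> 1"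
  shows "13 * (G*\<beta>)^2 + 12 * (G*\<beta>)^3 + 9 * (G*\<beta>)^4 \<le> 34 * (G^4 * \<beta>^2)"
proof -
  have g: "G^2 \<le> G^4" "G^3 \<le> G^4" using assms by (auto intro: power_increasing)
  have b: "\<beta>^3 \<le> \<beta>^2" "\<beta>^4 \<le> \<beta>^2" using assms by (auto intro: power_decreasing)
  have "(G*\<beta>)^2 \<le> G^4*\<beta>^2" unfolding power_mult_distrib using g assms by (intro mult_mono) auto
  moreover have "(G*\<beta>)^3 \<le> G^4*\<beta>^2" unfolding power_mult_distrib using g b assms by (intro mult_mono) auto
  moreover have "(G*\<beta>)^4 \<le> G^4*\<beta>^2" unfolding power_mult_distrib using g b assms by (intro mult_mono) auto
  ultimately show ?thesis by linarith
qed

lemma ring_aux: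
  fixes zj zk ujk uj uk ejk ej ek :: complex
  shows "(zj*zk + ujk + ejk) - (zj + uj + ej)*(zk + uk + ek) - (ujk - zj*uk - zk*uj)
       = ejk - zj*ek - zk*ej - uj*uk - uj*ek - ej*uk - ej*ek"
  by (simp add: algebra_simps)

lemma pair_bound:
  assumes n: "n \<ge> 1" and r: "1 \<le> r" and z: "cmod z \<le> r"
  shows "cmod (AA n z (j+k) - AA n z j * AA n z k
           - z*(1-z)*(of_nat j * z^(j-1))*(of_nat k * z^(k-1))/of_nat n)
     \<le> 34 * (((real j+1)^2*(real k+1)^2)^4 * r^j) * r^k / (real n)^2"
proof -
  define G where "G = (real j+1)^2*(real k+1)^2"
  define \<beta> where "\<beta> = 1 / real n"
  define M where "M = G * \<beta>"
  define aj where "aj = ss n j"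
  define ak where "ak = ss n k"
  define ajk where "ajk = ss n (j+k)"
  have G1: "1 \<le> G"
  proof -
    have "1 \<le> (real j+1)^2" "1 \<le> (real k+1)^2" by (simp_all add: one_le_power)
    from mult_mono[OF this] show ?thesis unfolding G_def by simp
  qed
  have b0: "0 < \<beta>" "\<beta> \<le> 1" using n by (auto simp: \<beta>_def)
  have sj: "(real j + 1)^2 \<le> G" unfolding G_def
    by (metis le_add_same_cancel2 mult_le_cancel_left1 of_nat_0_le_iff one_le_power zero_le_power2 linorder_not_le order.strict_trans2 zero_less_one)
  have sk: "(real k + 1)^2 \<le> G" unfolding G_def
    by (metis le_add_same_cancel2 mult_le_cancel_right1 of_nat_0_le_iff one_le_power zero_le_power2 linorder_not_le order.strict_trans2 zero_less_one)
  have sjk: "(real (j+k) + 1)^2 \<le> G"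
  proof -
    have "real (j+k) + 1 \<le> (real j + 1) * (real k + 1)" by (simp add: algebra_simps)
    then have "(real (j+k) + 1)^2 \<le> ((real j + 1) * (real k + 1))^2" by (intro power_mono) auto
    then show ?thesis unfolding G_def by (simp add: power_mult_distrib)
  qed
  have le_M: "ss n m \<le> M" if "(real m + 1)^2 \<le> G" for m
  proof -
    have "ss n m \<le> (real m + 1)^2 / real n" by (rule ss_le[OF n])
    also have "\<dots> \<le> G / real n" using that n by (intro divide_right_mono) auto
    finally show ?thesis by (simp add: M_def \<beta>_def)
  qed
  have aM: "aj \<le> M" "ak \<le> M" "ajk \<le> M" using le_M sj sk sjk aj_def ak_def ajk_def by auto
  have a0: "0 \<le> aj" "0 \<le> ak" "0 \<le> ajk" using ss_nonneg aj_def ak_def ajk_def by auto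
  define ej where "ej = ee n z j"
  define ek where "ek = ee n z k"
  define ejk where "ejk = ee n z (j+k)"
  define uj where "uj = uu n z j"
  define uk where "uk = uu n z k"
  define zj where "zj = z^j"
  define zk where "zk = z^k"
  have rj: "r^j \<ge> 0" "r^k \<ge> 0" using r by auto
  have nej: "cmod ej \<le> 3*aj^2*r^j" "cmod ek \<le> 3*ak^2*r^k" "cmod ejk \<le> 3*ajk^2*(r^j*r^k)"
    using ee_bound[OF n r z, of j] ee_bound[OF n r z, of k] ee_bound[OF n r z, of "j+k"] ej_def ek_def ejk_def aj_def ak_def ajk_def
    by (simp_all add: power_add)
  have nuj: "cmod uj \<le> 2*aj*r^j" "cmod uk \<le> 2*ak*r^k"
    using uu_bound[OF r z] uj_def uk_def aj_def ak_def by auto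
  have nzj: "cmod zj \<le> r^j" "cmod zk \<le> r^k" using norm_zpow_le[OF r z] zj_def zk_def by auto
  have eqE: "AA n z (j+k) - AA n z j * AA n z k - z*(1-z)*(of_nat j * z^(j-1))*(of_nat k * z^(k-1))/of_nat n
     = ejk - zj*ek - zk*ej - uj*uk - uj*ek - ej*uk - ej*ek"
  proof -
    have A: "AA n z m = z^m + uu n z m + ee n z m" for m by (simp add: ee_def)
    show ?thesis
      unfolding uu_ident[OF n, symmetric] A power_add ej_def ek_def ejk_def uj_def uk_def zj_def zk_def
      by (rule ring_aux)
  qed
  have t2: "cmod (zj*ek) \<le> r^j * (3*ak^2*r^k)" unfolding norm_mult using nzj nej a0 rj by (intro mult_mono) auto
  have t3: "cmod (zk*ej) \<le> r^k * (3*aj^2*r^j)" unfolding norm_mult using nzj nej a0 rj by (intro mult_mono) auto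
  have t4: "cmod (uj*uk) \<le> (2*aj*r^j) * (2*ak*r^k)" unfolding norm_mult using nuj a0 rj by (intro mult_mono) auto
  have t5: "cmod (uj*ek) \<le> (2*aj*r^j) * (3*ak^2*r^k)" unfolding norm_mult using nuj nej a0 rj by (intro mult_mono) auto
  have t6: "cmod (ej*uk) \<le> (3*aj^2*r^j) * (2*ak*r^k)" unfolding norm_mult using nuj nej a0 rj by (intro mult_mono) auto
  have t7: "cmod (ej*ek) \<le> (3*aj^2*r^j) * (3*ak^2*r^k)" unfolding norm_mult using nej a0 rj by (intro mult_mono) auto
  have h: "cmod (a - b) \<le> cmod a + cmod b" for a b :: complex by (rule norm_triangle_ineq4)
  have "cmod (ejk - zj*ek - zk*ej - uj*uk - uj*ek - ej*uk - ej*ek)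
      \<le> cmod ejk + cmod (zj*ek) + cmod (zk*ej) + cmod (uj*uk) + cmod (uj*ek) + cmod (ej*uk) + cmod (ej*ek)"
    using h[of "ejk - zj*ek - zk*ej - uj*uk - uj*ek - ej*uk" "ej*ek"]
          h[of "ejk - zj*ek - zk*ej - uj*uk - uj*ek" "ej*uk"]
          h[of "ejk - zj*ek - zk*ej - uj*uk" "uj*ek"]
          h[of "ejk - zj*ek - zk*ej" "uj*uk"]
          h[of "ejk - zj*ek" "zk*ej"]
          h[of "ejk" "zj*ek"] by linarith
  also have "\<dots> \<le> (r^j*r^k) * (3*ajk^2 + 3*ak^2 + 3*aj^2 + 4*(aj*ak) + 6*(aj*ak^2) + 6*(aj^2*ak) + 9*(aj^2*ak^2))"
    using nej(3) t2 t3 t4 t5 t6 t7 by (simp add: algebra_simps)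
  also have "\<dots> \<le> (r^j*r^k) * (34 * (G^4 * \<beta>^2))"
    using num_aux[OF a0(1) aM(1) a0(2) aM(2) a0(3) aM(3)] num_aux2[OF G1 b0] rj
    unfolding M_def by (intro mult_left_mono) auto
  also have "\<dots> = 34 * (((real j+1)^2*(real k+1)^2)^4 * r^j) * r^k / (real n)^2"
    unfolding G_def \<beta>_def by (simp add: power_divide)
  finally show ?thesis using eqE by simp
qed



definition Psi :: "nat \<Rightarrow> complex \<Rightarrow> (real \<Rightarrow> complex) \<Rightarrow> (real \<Rightarrow> complex) \<Rightarrow> complex \<Rightarrow> complex \<Rightarrow> complex" where
  "Psi n z u v du dv = bernstein n (\<lambda>x. u x * v x) z - bernstein n u z * bernstein n v z - z*(1-z)*du*dv/of_nat n"

lemma Psi_sym: "Psi n z u v du dv = Psi n z v u dv du"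
  unfolding Psi_def by (simp add: mult.commute)

lemma Psi_lin:
  assumes U: "\<And>m. m \<le> n \<Longrightarrow> (\<lambda>j. a j * U j (real m / real n)) sums u (real m / real n)"
      and D: "(\<lambda>j. a j * D j) sums du"
  shows "(\<lambda>j. a j * Psi n z (U j) v (D j) dv) sums Psi n z u v du dv"
proof -
  define x where "x m = real m / real n" for m
  define S1 where "S1 j = (\<Sum>m=0..n. wB n z m * v (x m) * (a j * U j (x m)))" for j
  define S2 where "S2 j = (\<Sum>m=0..n. wB n z m * (a j * U j (x m)))" for j
  define S3 where "S3 j = z*(1-z)*(a j * D j)*dv/of_nat n" for j
  have s1: "S1 sums (\<Sum>m=0..n. wB n z m * v (x m) * u (x m))"
    unfolding S1_def by (intro sums_sum sums_mult) (use U x_def in auto)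
  have s2: "S2 sums (\<Sum>m=0..n. wB n z m * u (x m))"
    unfolding S2_def by (intro sums_sum sums_mult) (use U x_def in auto)
  have s3: "S3 sums (z*(1-z)*du*dv/of_nat n)"
    unfolding S3_def by (intro sums_divide sums_mult2 sums_mult D)
  have all: "(\<lambda>j. S1 j - S2 j * bernstein n v z - S3 j) sums
     ((\<Sum>m=0..n. wB n z m * v (x m) * u (x m)) - (\<Sum>m=0..n. wB n z m * u (x m)) * bernstein n v z - z*(1-z)*du*dv/of_nat n)"
    by (intro sums_diff sums_mult2 s1 s2 s3)
  have e1: "(\<lambda>j. a j * Psi n z (U j) v (D j) dv) = (\<lambda>j. S1 j - S2 j * bernstein n v z - S3 j)"
    by (rule ext) (simp add: Psi_def bernstein_wB S1_def S2_def S3_def x_def sum_distrib_left algebra_simps)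
  have e2: "Psi n z u v du dv = (\<Sum>m=0..n. wB n z m * v (x m) * u (x m)) - (\<Sum>m=0..n. wB n z m * u (x m)) * bernstein n v z - z*(1-z)*du*dv/of_nat n"
    by (simp add: Psi_def bernstein_wB x_def algebra_simps)
  show ?thesis using all unfolding e1 e2 .
qed

lemma Psi_mono:
  "Psi n z (\<lambda>x. of_real x ^ j) (\<lambda>x. of_real x ^ k) (of_nat j * z^(j-1)) (of_nat k * z^(k-1))
   = AA n z (j+k) - AA n z j * AA n z k - z*(1-z)*(of_nat j * z^(j-1))*(of_nat k * z^(k-1))/of_nat n"
  unfolding Psi_def AA_def by (simp add: power_add mult.assoc)

lemma summable_poly_geom:
  fixes q :: real
  assumes "0 \<le> q" "q < 1"
  shows "summable (\<lambda>j. (real j + 1)^8 * q^j)"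
proof -
  define c where "c = (1 + q) / 2"
  have c1: "c < 1" "q < c" using assms by (auto simp: c_def)
  have lim: "(\<lambda>j. (1 + inverse (real (Suc j)))^8 * q) \<longlonglongrightarrow> (1 + 0)^8 * q"
    by (intro tendsto_intros LIMSEQ_inverse_real_of_nat)
  then have "eventually (\<lambda>j. (1 + inverse (real (Suc j)))^8 * q < c) sequentially"
    using c1 by (intro order_tendstoD(2)) auto
  then obtain N where N: "\<And>j. j \<ge> N \<Longrightarrow> (1 + inverse (real (Suc j)))^8 * q < c"
    unfolding eventually_sequentially by blast
  show ?thesis
  proof (rule summable_ratio_test[OF c1(1)])
    fix j assume j: "j \<ge> N"
    have eq: "(real (Suc j) + 1)^8 * q^(Suc j) = ((1 + inverse (real (Suc j)))^8 * q) * ((real j + 1)^8 * q^j)"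
    proof -
      have "real (Suc j) + 1 = (1 + inverse (real (Suc j))) * (real j + 1)" by (simp add: field_simps)
      then show ?thesis by (simp add: power_mult_distrib)
    qed
    have nn: "0 \<le> (real j + 1)^8 * q^j" using assms by simp
    have "(real (Suc j) + 1)^8 * q^(Suc j) \<le> c * ((real j + 1)^8 * q^j)"
      unfolding eq using N[OF j] nn by (intro mult_right_mono) auto
    then show "norm ((real (Suc j) + 1)^8 * q^(Suc j)) \<le> c * norm ((real j + 1)^8 * q^j)"
      using assms by simp
  qed
qed



lemma holo_data:
  fixes f :: "complex \<Rightarrow> complex"
  assumes holf: "f holomorphic_on ball 0 R" and r: "1 \<le> r" "r < R" and z: "cmod z \<le> r"
  shows "\<And>x::real. 0 \<le> x \<Longrightarrow> x \<le> 1 \<Longrightarrow> (\<lambda>j. (deriv^^j) f 0 / fact j * of_real x ^ j) sums f (of_real x)"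
    and "(\<lambda>j. (deriv^^j) f 0 / fact j * (of_nat j * z^(j-1))) sums deriv f z"
    and "summable (\<lambda>j. cmod ((deriv^^j) f 0 / fact j) * ((real j + 1)^8 * r^j))"
proof -
  fix x :: real assume x: "0 \<le> x" "x \<le> 1"
  have "of_real x \<in> ball (0::complex) R" using x r by auto
  from holomorphic_power_series[OF holf this]
  show "(\<lambda>j. (deriv^^j) f 0 / fact j * of_real x ^ j) sums f (of_real x)" by simp
next
  define T where "T j = (deriv^^j) f 0 / fact j * (of_nat j * z^(j-1))" for j
  have hd: "deriv f holomorphic_on ball 0 R" by (rule holomorphic_deriv[OF holf open_ball])
  have zin: "z \<in> ball 0 R" using z r by auto
  have s: "(\<lambda>j. (deriv^^j) (deriv f) 0 / fact j * (z - 0)^j) sums deriv f z"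
    by (rule holomorphic_power_series[OF hd zin])
  have "(\<lambda>j. T (Suc j)) = (\<lambda>j. (deriv^^j) (deriv f) 0 / fact j * (z - 0)^j)"
  proof (rule ext)
    fix j
    have "(deriv^^(Suc j)) f = (deriv^^j) (deriv f)" by (simp only: funpow_Suc_right comp_apply)
    then show "T (Suc j) = (deriv^^j) (deriv f) 0 / fact j * (z - 0)^j"
      unfolding T_def by (simp add: field_simps del: of_nat_Suc)
  qed
  with s have "(\<lambda>j. T (Suc j)) sums deriv f z" by simp
  then have "T sums (deriv f z + T 0)" by (simp add: sums_Suc_iff)
  then show "(\<lambda>j. (deriv^^j) f 0 / fact j * (of_nat j * z^(j-1))) sums deriv f z"
    unfolding T_def by simp
next
  define \<rho> where "\<rho> = (r + R) / 2"
  have \<rho>: "r < \<rho>" "\<rho> < R" "0 < \<rho>" using r by (auto simp: \<rho>_def)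
  have sub: "cball 0 \<rho> \<subseteq> ball (0::complex) R" using \<rho> by auto
  have cont: "continuous_on (cball 0 \<rho>) f"
    using holomorphic_on_imp_continuous_on[OF holf] sub continuous_on_subset by blast
  have "bounded (f ` cball 0 \<rho>)" by (intro compact_imp_bounded compact_continuous_image cont compact_cball)
  then obtain B where B: "\<And>w. w \<in> cball 0 \<rho> \<Longrightarrow> cmod (f w) \<le> B"
    unfolding bounded_iff by (metis image_eqI)
  have holf': "f holomorphic_on ball 0 \<rho>" using holf sub by (meson ball_subset_cball holomorphic_on_subset subset_trans)
  have coef: "cmod ((deriv^^j) f 0 / fact j) \<le> B / \<rho>^j" for j
  proof -
    have "cmod ((deriv^^j) f 0) \<le> fact j * B / \<rho>^j"
      by (rule Cauchy_inequality[OF holf' cont \<rho>(3)]) (use B in auto)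
    then show ?thesis by (simp add: norm_divide field_simps)
  qed
  have B0: "0 \<le> B" using B[of 0] \<rho> by (meson centre_in_cball less_imp_le norm_ge_zero order_trans)
  define q where "q = r / \<rho>"
  have q: "0 \<le> q" "q < 1" using \<rho> r by (auto simp: q_def)
  have "summable (\<lambda>j. B * ((real j + 1)^8 * q^j))"
    by (intro summable_mult summable_poly_geom q)
  then show "summable (\<lambda>j. cmod ((deriv^^j) f 0 / fact j) * ((real j + 1)^8 * r^j))"
  proof (rule summable_comparison_test')
    fix j :: nat assume "j \<ge> 0"
    have "cmod ((deriv^^j) f 0 / fact j) * ((real j + 1)^8 * r^j) \<le> B / \<rho>^j * ((real j + 1)^8 * r^j)"
      using coef r by (intro mult_right_mono) auto
    also have "\<dots> = B * ((real j + 1)^8 * q^j)" using \<rho> by (simp add: q_def power_divide field_simps)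
    finally show "norm (cmod ((deriv^^j) f 0 / fact j) * ((real j + 1)^8 * r^j)) \<le> B * ((real j + 1)^8 * q^j)"
      using r by simp
  qed
qed



lemma ar_aux: "34 * (X * Y * a) * b / N = 34 / N * (X * a) * (Y * (b::real))"
  by (simp add: divide_inverse mult_ac)

theorem theorem4p2:
  fixes f g :: "complex \<Rightarrow> complex" and r R :: real
  assumes "1 \<le> r" and "r < R"
    and "f holomorphic_on ball 0 R" and "g holomorphic_on ball 0 R"
  shows "\<exists>C. \<forall>n::nat. n \<ge> 1 \<longrightarrow> (\<forall>z. cmod z \<le> r \<longrightarrow>
           cmod (bernstein n (\<lambda>x. f (of_real x) * g (of_real x)) z
                 - bernstein n (\<lambda>x. f (of_real x)) z * bernstein n (\<lambda>x. g (of_real x)) z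
                 - z * (1 - z) * deriv f z * deriv g z / of_nat n)
           \<le> C / (real n)^2)"
proof -
  define a where "a j = (deriv^^j) f 0 / fact j" for j
  define b where "b j = (deriv^^j) g 0 / fact j" for j
  define cj where "cj j = (real j + 1)^8 * r^j" for j
  define Sf where "Sf = (\<Sum>j. cmod (a j) * cj j)"
  define Sg where "Sg = (\<Sum>j. cmod (b j) * cj j)"
  have z0: "cmod (0::complex) \<le> r" using assms by simp
  have smf: "summable (\<lambda>j. cmod (a j) * cj j)"
    using holo_data(3)[OF assms(3) assms(1,2) z0] unfolding a_def cj_def .
  have smg: "summable (\<lambda>j. cmod (b j) * cj j)"
    using holo_data(3)[OF assms(4) assms(1,2) z0] unfolding b_def cj_def .
  show ?thesis
  proof (intro exI[of _ "34 * Sf * Sg"] allI impI)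
    fix n :: nat and z :: complex
    assume n: "n \<ge> 1" and z: "cmod z \<le> r"
    define f' where "f' = (\<lambda>x::real. f (of_real x))"
    define g' where "g' = (\<lambda>x::real. g (of_real x))"
    define U where "U j = (\<lambda>x::real. (of_real x :: complex) ^ j)" for j
    define D where "D j = of_nat j * z^(j-1)" for j
    define K where "K = 34 / (real n)^2"
    have K0: "K \<ge> 0" by (simp add: K_def)
    have hx: "0 \<le> real m / real n" "real m / real n \<le> 1" if "m \<le> n" for m
      using that n by auto
    have fU: "(\<lambda>j. a j * U j (real m / real n)) sums f' (real m / real n)" if "m \<le> n" for m
      using holo_data(1)[OF assms(3) assms(1,2) z hx[OF that]] unfolding a_def U_def f'_def .
    have gU: "(\<lambda>j. b j * U j (real m / real n)) sums g' (real m / real n)" if "m \<le> n" for m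
      using holo_data(1)[OF assms(4) assms(1,2) z hx[OF that]] unfolding b_def U_def g'_def .
    have fD: "(\<lambda>j. a j * D j) sums deriv f z"
      using holo_data(2)[OF assms(3) assms(1,2) z] unfolding a_def D_def .
    have gD: "(\<lambda>j. b j * D j) sums deriv g z"
      using holo_data(2)[OF assms(4) assms(1,2) z] unfolding b_def D_def .
    have pb: "cmod (Psi n z (U j) (U k) (D j) (D k)) \<le> K * cj j * cj k" for j k
    proof -
      have "cmod (Psi n z (U j) (U k) (D j) (D k))
          \<le> 34 * (((real j+1)^2*(real k+1)^2)^4 * r^j) * r^k / (real n)^2"
        unfolding U_def D_def Psi_mono by (rule pair_bound[OF n assms(1) z])
      also have "\<dots> = K * cj j * cj k"
      proof -
        have h8: "((real j+1)^2*(real k+1)^2)^4 = (real j+1)^8 * (real k+1)^8"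
          by (simp add: power_mult_distrib power_mult[symmetric])
        show ?thesis unfolding K_def cj_def h8 by (rule ar_aux)
      qed
      finally show ?thesis .
    qed
    have step1: "(\<lambda>k. b k * Psi n z (U j) (U k) (D j) (D k)) sums Psi n z (U j) g' (D j) (deriv g z)" for j
    proof -
      have "(\<lambda>k. b k * Psi n z (U k) (U j) (D k) (D j)) sums Psi n z g' (U j) (deriv g z) (D j)"
        by (rule Psi_lin[where n=n and a=b and U=U and u=g' and D=D and du="deriv g z" and z=z and v="U j" and dv="D j", OF gU gD])
      moreover have e1: "\<And>k. Psi n z (U k) (U j) (D k) (D j) = Psi n z (U j) (U k) (D j) (D k)" by (rule Psi_sym)
      moreover have e2: "Psi n z g' (U j) (deriv g z) (D j) = Psi n z (U j) g' (D j) (deriv g z)" by (rule Psi_sym)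
      ultimately show ?thesis by (simp only: e1 e2)
    qed
    have step2: "(\<lambda>j. a j * Psi n z (U j) g' (D j) (deriv g z)) sums Psi n z f' g' (deriv f z) (deriv g z)"
      by (rule Psi_lin[where n=n and a=a and U=U and u=f' and D=D and du="deriv f z" and z=z and v=g' and dv="deriv g z", OF fU fD])
    have bd1: "cmod (Psi n z (U j) g' (D j) (deriv g z)) \<le> Sg * (K * cj j)" for j
    proof -
      have "Psi n z (U j) g' (D j) (deriv g z) = (\<Sum>k. b k * Psi n z (U j) (U k) (D j) (D k))"
        using step1[of j] by (simp add: sums_iff)
      also have "cmod \<dots> \<le> (\<Sum>k. cmod (b k) * cj k * (K * cj j))"
      proof (rule norm_suminf_le)
        fix k
        have "cmod (b k * Psi n z (U j) (U k) (D j) (D k)) \<le> cmod (b k) * (K * cj j * cj k)"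
          unfolding norm_mult using pb[of j k] by (intro mult_left_mono) auto
        then show "cmod (b k * Psi n z (U j) (U k) (D j) (D k)) \<le> cmod (b k) * cj k * (K * cj j)"
          by (simp add: algebra_simps)
      next
        show "summable (\<lambda>k. cmod (b k) * cj k * (K * cj j))" by (intro summable_mult2 smg)
      qed
      also have "\<dots> = Sg * (K * cj j)" unfolding Sg_def by (rule suminf_mult2[OF smg, symmetric])
      finally show ?thesis .
    qed
    have "Psi n z f' g' (deriv f z) (deriv g z) = (\<Sum>j. a j * Psi n z (U j) g' (D j) (deriv g z))"
      using step2 by (simp add: sums_iff)
    also have "cmod \<dots> \<le> (\<Sum>j. cmod (a j) * cj j * (K * Sg))"
    proof (rule norm_suminf_le)
      fix j
      have "cmod (a j * Psi n z (U j) g' (D j) (deriv g z)) \<le> cmod (a j) * (Sg * (K * cj j))"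
        unfolding norm_mult using bd1[of j] by (intro mult_left_mono) auto
      then show "cmod (a j * Psi n z (U j) g' (D j) (deriv g z)) \<le> cmod (a j) * cj j * (K * Sg)"
        by (simp add: algebra_simps)
    next
      show "summable (\<lambda>j. cmod (a j) * cj j * (K * Sg))" by (intro summable_mult2 smf)
    qed
    also have "\<dots> = Sf * (K * Sg)" unfolding Sf_def by (rule suminf_mult2[OF smf, symmetric])
    also have "\<dots> = 34 * Sf * Sg / (real n)^2" unfolding K_def by simp
    finally show "cmod (bernstein n (\<lambda>x. f (of_real x) * g (of_real x)) z
                 - bernstein n (\<lambda>x. f (of_real x)) z * bernstein n (\<lambda>x. g (of_real x)) z
                 - z * (1 - z) * deriv f z * deriv g z / of_nat n) \<le> 34 * Sf * Sg / (real n)^2"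
      unfolding Psi_def f'_def g'_def by simp
  qed
qed

end
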